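(* Let $0<d<2$, $t\in[0,1]$ and $\ell\ge0$. Let $\rho^{(0)}_{d,t}$ be the atom at the origin of $\mathbb{R}^2$ and $\rho^{(\ell)}_{d,t}=\mathrm{LL}^{\otimes}_{d,t}(\rho^{(\ell-1)}_{d,t})$. Define $$\vec\mu^{(2\ell)}=\Big(\mu_{\vec T_1^{(2\ell)}}(\sigma_o=1),\ \mu_{\vec T_2^{(2\ell)}}(\sigma_o=1)\Big)\in(0,1)^2.$$ Then $\vec\mu^{(2\ell)}$ has distribution $\psi(\rho^{(\ell)}_{d,t})$, the pushforward of $\rho^{(\ell)}_{d,t}$ under $$\psi(z_1,z_2)=\big((1+\tanh(z_1/2))/2,\ (1+\tanh(z_2/2))/2\big).$$
   Context: **Operator.** For a probability measure $\rho$ on $\mathbb{R}^2$, $\mathrm{LL}^{\otimes}_{d,t}(\rho)$ is defined as follows. Let $\xi_i,\xi'_i,\xi''_i$ ($i\ge1$) have distribution $\rho$, with coordinates $\xi_{i,1},\xi_{i,2}$ and similarly for $\xi'_i,\xi''_i$. Let $D\sim\mathrm{Po}(td)$, $D',D''\sim\mathrm{Po}((1-t)d)$, and let $s_i,s'_i,s''_i,r_i,r'_i,r''_i$ be uniform on $\{\pm1\}$, all independent. Then $\mathrm{LL}^{\otimes}_{d,t}(\rho)$ is the law of the vector with first coordinate $$\sum_{i\le D}s_i\log\tfrac{1+r_i\tanh(\xi_{i,1}/2)}2+\sum_{i\le D'}s'_i\log\tfrac{1+r'_i\tanh(\xi'_{i,1}/2)}2$$ and second coordinate $$\sum_{i\le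 D}s_i\log\tfrac{1+r_i\tanh(\xi_{i,2}/2)}2+\sum_{i\le D''}s''_i\log\tfrac{1+r''_i\tanh(\xi''_{i,2}/2)}2.$$ **Tree.** The multitype Galton–Watson tree $\vec T^\otimes$ has variable nodes of types shared, 1-distinct and 2-distinct, and clause nodes of types $(s,s')$-shared, $(s,s')$ 1-distinct and $(s,s')$ 2-distinct for $s,s'\in\{\pm1\}$. The root $o$ is a shared variable. Offspring rules (all independent): - A shared variable has, for each $(s,s')$, $\mathrm{Po}(dt/4)$ shared, $\mathrm{Po}(d(1-t)/4)$ 1-distinct and $\mathrm{Po}(d(1-t)/4)$ 2-distinct clause children of type $(s,s')$. - An $h$-distinct variable has, for each $(s,s')$, $\mathrm{Po}(d/4)$ $h$-distinct clause children of type $(s,s')$. - A shared clause has one shared variable child. - An $h$-distinct clause has one $h$-distinct variable child. The tree is read as a 2-CNF: a clause node of type $(s,s')$ contains its parent variable with sign $s$ and its child variable with sign $s'$. $\vec T_h$ is obtained from $\vec T^\otimes$ by deleting all $(3-h)$-distinct nodes. $\vec T_h^{(2\ell)}$ deletes from $\vec T_h$ all nodes at distance more than $2\ell$ from $o$. For a satisfiable 2-CNF $\Psi$, $\mu_\Psi$ denotes the uniform distribution on satisfying assignments $\sigma\in\{\pm1\}^{\text{variables}}$. *)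

theory Defs
  imports "HOL-Probability.Probability"
begin

definition Po :: "real \<Rightarrow> nat pmf" where
  "Po r = (if r > 0 then poisson_pmf r else return_pmf 0)"

definition sign_pmf :: "real pmf" where
  "sign_pmf = pmf_of_set {1, -1}"

definition LLterm :: "real \<Rightarrow> real \<Rightarrow> real \<Rightarrow> real" where
  "LLterm s r x = s * ln ((1 + r * tanh (x / 2)) / 2)"

definition LLunit :: "(real \<times> real) pmf \<Rightarrow> (real \<times> real) pmf" where
  "LLunit \<rho> = do { \<xi> \<leftarrow> \<rho>; s \<leftarrow> sign_pmf; r \<leftarrow> sign_pmf;
                    return_pmf (LLterm s r (fst \<xi>), LLterm s r (snd \<xi>)) }"

definition LL :: "real \<Rightarrow> real \<Rightarrow> (real \<times> real) pmf \<Rightarrow> (real \<times> real) pmf" where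
  "LL d t \<rho> = do {
     D \<leftarrow> Po (t * d); D' \<leftarrow> Po ((1 - t) * d); D'' \<leftarrow> Po ((1 - t) * d);
     A \<leftarrow> replicate_pmf D (LLunit \<rho>);
     B \<leftarrow> replicate_pmf D' (LLunit \<rho>);
     C \<leftarrow> replicate_pmf D'' (LLunit \<rho>);
     return_pmf (sum_list (map fst A) + sum_list (map fst B),
                 sum_list (map snd A) + sum_list (map snd C)) }"

primrec rho :: "real \<Rightarrow> real \<Rightarrow> nat \<Rightarrow> (real \<times> real) pmf" where
  "rho d t 0 = return_pmf (0, 0)"
| "rho d t (Suc l) = LL d t (rho d t l)"

definition psi :: "real \<times> real \<Rightarrow> real \<times> real" where
  "psi z = ((1 + tanh (fst z / 2)) / 2, (1 + tanh (snd z / 2)) / 2)"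

datatype ntype = Shared | Dist1 | Dist2

text \<open>A variable node with its list of clause children; each clause child is
  (type of the clause, sign s of the parent variable, sign s' of the child variable,
  subtree of the child variable).  Signs: True = +1, False = -1.  The type of a
  variable node equals the type of its parent clause; the root is shared.\<close>
datatype mtree = MNode "(ntype \<times> bool \<times> bool \<times> mtree) list"

fun concat_pmfs :: "'a list pmf list \<Rightarrow> 'a list pmf" where
  "concat_pmfs [] = return_pmf []"
| "concat_pmfs (p # ps) = do { x \<leftarrow> p; y \<leftarrow> concat_pmfs ps; return_pmf (x @ y) }"

definition child_group :: "real \<Rightarrow> ntype \<Rightarrow> bool \<Rightarrow> bool \<Rightarrow> mtree pmf
    \<Rightarrow> (ntype \<times> bool \<times> bool \<times> mtree) list pmf" where
  "child_group lam k s s' p = do { N \<leftarrow> Po lam; cs \<leftarrow> replicate_pmf N p;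
                                  return_pmf (map (\<lambda>c. (k, s, s', c)) cs) }"

definition signs :: "(bool \<times> bool) list" where
  "signs = [(True, True), (True, False), (False, True), (False, False)]"

text \<open>offspring types and Poisson rates (per sign pair (s,s')) of a variable of type k\<close>
fun offspring :: "real \<Rightarrow> real \<Rightarrow> ntype \<Rightarrow> (ntype \<times> real) list" where
  "offspring d t Shared = [(Shared, d * t / 4), (Dist1, d * (1 - t) / 4), (Dist2, d * (1 - t) / 4)]"
| "offspring d t Dist1 = [(Dist1, d / 4)]"
| "offspring d t Dist2 = [(Dist2, d / 4)]"

text \<open>gen d t l k: law of the subtree rooted at a variable of type k, truncated so that
  only l further variable generations (2l further levels) are kept.\<close>
primrec gen :: "real \<Rightarrow> real \<Rightarrow> nat \<Rightarrow> ntype \<Rightarrow> mtree pmf" where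
  "gen d t 0 k = return_pmf (MNode [])"
| "gen d t (Suc l) k = map_pmf MNode
     (concat_pmfs [child_group lam k' s s' (gen d t l k'). (k', lam) \<leftarrow> offspring d t k, (s, s') \<leftarrow> signs])"

definition Ttensor :: "real \<Rightarrow> real \<Rightarrow> nat \<Rightarrow> mtree pmf" where
  "Ttensor d t l = gen d t l Shared"

fun keep :: "nat \<Rightarrow> ntype \<Rightarrow> bool" where
  "keep h Shared = True"
| "keep h Dist1 = (h = 1)"
| "keep h Dist2 = (h = 2)"

text \<open>T_h: delete all (3-h)-distinct nodes\<close>
fun restrict :: "nat \<Rightarrow> mtree \<Rightarrow> mtree" where
  "restrict h (MNode cs) =
     MNode (map (\<lambda>(k, s, s', c). (k, s, s', restrict h c)) (filter (\<lambda>x. keep h (fst x)) cs))"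

text \<open>variables are addressed by their paths (lists of child indices) from the root\<close>
inductive is_var :: "mtree \<Rightarrow> nat list \<Rightarrow> bool" where
  "is_var (MNode cs) []"
| "i < length cs \<Longrightarrow> cs ! i = (k, a, b, c) \<Longrightarrow> is_var c p \<Longrightarrow> is_var (MNode cs) (i # p)"

text \<open>clause t p i s s': the clause between the variable at path p (sign s) and its
  i-th child variable at path p @ [i] (sign s')\<close>
inductive clause :: "mtree \<Rightarrow> nat list \<Rightarrow> nat \<Rightarrow> bool \<Rightarrow> bool \<Rightarrow> bool" where
  "i < length cs \<Longrightarrow> cs ! i = (k, s, s', c) \<Longrightarrow> clause (MNode cs) [] i s s'"
| "i < length cs \<Longrightarrow> cs ! i = (k, a, b, c) \<Longrightarrow> clause c p j s s' \<Longrightarrow>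
     clause (MNode cs) (i # p) j s s'"

definition satisfies :: "mtree \<Rightarrow> (nat list \<Rightarrow> bool) \<Rightarrow> bool" where
  "satisfies T \<sigma> \<longleftrightarrow> (\<forall>p i s s'. clause T p i s s' \<longrightarrow> (\<sigma> p = s \<or> \<sigma> (p @ [i]) = s'))"

definition SAT :: "mtree \<Rightarrow> (nat list \<Rightarrow> bool) set" where
  "SAT T = {\<sigma> \<in> {p. is_var T p} \<rightarrow>\<^sub>E (UNIV :: bool set). satisfies T \<sigma>}"

definition mu_root :: "mtree \<Rightarrow> real" where
  "mu_root T = real (card {\<sigma> \<in> SAT T. \<sigma> [] = True}) / real (card (SAT T))"

definition vec_mu :: "real \<Rightarrow> real \<Rightarrow> nat \<Rightarrow> (real \<times> real) pmf" where
  "vec_mu d t l = map_pmf (\<lambda>T. (mu_root (restrict 1 T), mu_root (restrict 2 T))) (Ttensor d t l)"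

end

theory Submission
  imports Defs
begin


definition ch :: "ntype \<times> bool \<times> bool \<times> mtree \<Rightarrow> mtree" where "ch x = snd (snd (snd x))"
definition sa :: "ntype \<times> bool \<times> bool \<times> mtree \<Rightarrow> bool" where "sa x = fst (snd x)"
definition sb :: "ntype \<times> bool \<times> bool \<times> mtree \<Rightarrow> bool" where "sb x = fst (snd (snd x))"

lemma is_var_MNode: "is_var (MNode cs) p \<longleftrightarrow>
   p = [] \<or> (\<exists>i q. p = i # q \<and> i < length cs \<and> is_var (ch (cs ! i)) q)"
proof
  assume "is_var (MNode cs) p" then show "p = [] \<or> (\<exists>i q. p = i # q \<and> i < length cs \<and> is_var (ch (cs ! i)) q)"
    by (cases rule: is_var.cases) (auto simp: ch_def)
next
  assume "p = [] \<or> (\<exists>i q. p = i # q \<and> i < length cs \<and> is_var (ch (cs ! i)) q)"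
  then show "is_var (MNode cs) p"
  proof
    assume "p = []" then show ?thesis by (simp add: is_var.intros(1))
  next
    assume "\<exists>i q. p = i # q \<and> i < length cs \<and> is_var (ch (cs ! i)) q"
    then obtain i q where "p = i # q" "i < length cs" "is_var (ch (cs ! i)) q" by blast
    then show ?thesis
      by (metis ch_def is_var.intros(2) prod.collapse)
  qed
qed

lemma clause_MNode: "clause (MNode cs) p j s s' \<longleftrightarrow>
   (p = [] \<and> j < length cs \<and> sa (cs ! j) = s \<and> sb (cs ! j) = s') \<or>
   (\<exists>i q. p = i # q \<and> i < length cs \<and> clause (ch (cs ! i)) q j s s')"
proof
  assume "clause (MNode cs) p j s s'" then show "(p = [] \<and> j < length cs \<and> sa (cs ! j) = s \<and> sb (cs ! j) = s') \<or>
   (\<exists>i q. p = i # q \<and> i < length cs \<and> clause (ch (cs ! i)) q j s s')"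
    by (cases rule: clause.cases) (auto simp: ch_def sa_def sb_def)
next
  assume "(p = [] \<and> j < length cs \<and> sa (cs ! j) = s \<and> sb (cs ! j) = s') \<or>
   (\<exists>i q. p = i # q \<and> i < length cs \<and> clause (ch (cs ! i)) q j s s')"
  then show "clause (MNode cs) p j s s'"
  proof
    assume "p = [] \<and> j < length cs \<and> sa (cs ! j) = s \<and> sb (cs ! j) = s'"
    then have "cs ! j = (fst (cs!j), s, s', ch (cs!j))" "p = []" "j < length cs"
      by (auto simp: sa_def sb_def ch_def prod_eq_iff)
    then show ?thesis using clause.intros(1) by metis
  next
    assume "\<exists>i q. p = i # q \<and> i < length cs \<and> clause (ch (cs ! i)) q j s s'"
    then obtain i q where "p = i # q" "i < length cs" "clause (ch (cs ! i)) q j s s'" by blast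
    then show ?thesis by (metis ch_def clause.intros(2) prod.collapse)
  qed
qed

lemma satisfies_MNode: "satisfies (MNode cs) \<sigma> \<longleftrightarrow>
  (\<forall>j<length cs. \<sigma> [] = sa (cs ! j) \<or> \<sigma> [j] = sb (cs ! j)) \<and>
  (\<forall>i<length cs. satisfies (ch (cs ! i)) (\<lambda>q. \<sigma> (i # q)))"
  unfolding satisfies_def clause_MNode apply (rule iffI)
  subgoal apply (intro conjI allI impI)
    subgoal for j by (erule allE[of _ "[]"], erule allE[of _ j]) auto
    subgoal for i p ia s s' by (erule allE[of _ "i # p"], erule allE[of _ ia]) auto
    done
  subgoal by (metis append_Cons append_Nil)
  done

lemma finite_vars: "finite {p. is_var T p}"
proof (induction T)
  case (MNode cs)
  have "{p. is_var (MNode cs) p} = {[]} \<union> (\<Union>i<length cs. (Cons i) ` {q. is_var (ch (cs ! i)) q})"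
    unfolding is_var_MNode by auto
  moreover have "finite {q. is_var (ch (cs ! i)) q}" if "i < length cs" for i
    using MNode[of "cs ! i"] that unfolding ch_def
    by (metis nth_mem prod.collapse snds.intros)
  ultimately show ?case by simp
qed

lemma SAT_iff: "\<sigma> \<in> SAT T \<longleftrightarrow> (\<forall>p. \<not> is_var T p \<longrightarrow> \<sigma> p = undefined) \<and> satisfies T \<sigma>"
  unfolding SAT_def PiE_iff extensional_def by auto

lemma finite_SAT: "finite (SAT T)"
proof -
  have "SAT T \<subseteq> {p. is_var T p} \<rightarrow>\<^sub>E (UNIV :: bool set)" unfolding SAT_def by auto
  moreover have "finite ({p. is_var T p} \<rightarrow>\<^sub>E (UNIV :: bool set))"
    by (rule finite_PiE) (auto simp: finite_vars)
  ultimately show ?thesis by (rule finite_subset)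
qed

definition Z :: "mtree \<Rightarrow> bool \<Rightarrow> nat" where
  "Z T b = card {\<sigma> \<in> SAT T. \<sigma> [] = b}"

lemma card_SAT: "card (SAT T) = Z T True + Z T False"
proof -
  have "SAT T = {\<sigma> \<in> SAT T. \<sigma> [] = True} \<union> {\<sigma> \<in> SAT T. \<sigma> [] = False}" by auto
  then have "card (SAT T) = card ({\<sigma> \<in> SAT T. \<sigma> [] = True} \<union> {\<sigma> \<in> SAT T. \<sigma> [] = False})" by simp
  also have "\<dots> = Z T True + Z T False" unfolding Z_def
    by (rule card_Un_disjoint) (auto intro: finite_subset[OF _ finite_SAT])
  finally show ?thesis .
qed

lemma Z_MNode: "Z (MNode cs) x = (\<Prod>i<length cs. card {\<tau> \<in> SAT (ch (cs ! i)). x = sa (cs ! i) \<or> \<tau> [] = sb (cs ! i)})"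
proof -
  define n where "n = length cs"
  define A where "A i = {\<tau> \<in> SAT (ch (cs ! i)). x = sa (cs ! i) \<or> \<tau> [] = sb (cs ! i)}" for i
  define S where "S = {\<sigma> \<in> SAT (MNode cs). \<sigma> [] = x}"
  define F where "F \<sigma> = (\<lambda>i\<in>{..<n}. \<lambda>q. \<sigma> (i # q))" for \<sigma> :: "nat list \<Rightarrow> bool"
  define G where "G f = (\<lambda>p. case p of [] \<Rightarrow> x | i # q \<Rightarrow> if i < n then f i q else undefined)"
    for f :: "nat \<Rightarrow> nat list \<Rightarrow> bool"
  have "bij_betw F S (PiE {..<n} A)"
  proof (rule bij_betw_byWitness[where f'=G])
    show "\<forall>a\<in>S. G (F a) = a"
    proof
      fix \<sigma> assume "\<sigma> \<in> S"
      then have s: "\<sigma> [] = x" "\<And>p. \<not> is_var (MNode cs) p \<Longrightarrow> \<sigma> p = undefined"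
        unfolding S_def SAT_iff by auto
      show "G (F \<sigma>) = \<sigma>"
      proof
        fix p show "G (F \<sigma>) p = \<sigma> p"
          using s(1) s(2)[of p] by (cases p) (auto simp: G_def F_def is_var_MNode n_def)
      qed
    qed
    show "\<forall>f\<in>PiE {..<n} A. F (G f) = f"
    proof
      fix f assume f: "f \<in> PiE {..<n} A"
      show "F (G f) = f"
      proof
        fix i show "F (G f) i = f i"
          using f by (cases "i < n") (auto simp: F_def G_def PiE_iff extensional_def)
      qed
    qed
    show "F ` S \<subseteq> PiE {..<n} A"
    proof
      fix g assume "g \<in> F ` S"
      then obtain \<sigma> where "\<sigma> \<in> S" and g: "g = F \<sigma>" by blast
      then have s: "\<sigma> [] = x" "\<And>p. \<not> is_var (MNode cs) p \<Longrightarrow> \<sigma> p = undefined"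
          "satisfies (MNode cs) \<sigma>"
        unfolding S_def SAT_iff by auto
      have "(\<lambda>q. \<sigma> (i # q)) \<in> A i" if "i < n" for i
        unfolding A_def SAT_iff
      proof (intro CollectI conjI allI impI)
        fix q assume "\<not> is_var (ch (cs ! i)) q"
        then show "\<sigma> (i # q) = undefined" using s(2)[of "i # q"] that by (auto simp: is_var_MNode n_def)
      next
        show "satisfies (ch (cs ! i)) (\<lambda>q. \<sigma> (i # q))" using s(3) that by (auto simp: satisfies_MNode n_def)
      next
        show "x = sa (cs ! i) \<or> \<sigma> [i] = sb (cs ! i)" using s(1,3) that by (auto simp: satisfies_MNode n_def)
      qed
      then show "g \<in> PiE {..<n} A" unfolding g F_def by auto
    qed
    show "G ` PiE {..<n} A \<subseteq> S"
    proof
      fix \<sigma> assume "\<sigma> \<in> G ` PiE {..<n} A"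
      then obtain f where f: "f \<in> PiE {..<n} A" and sg: "\<sigma> = G f" by blast
      have fi: "\<And>i. i < n \<Longrightarrow> f i \<in> A i" and fu: "\<And>i. \<not> i < n \<Longrightarrow> f i = undefined"
        using f by (auto simp: PiE_iff extensional_def)
      have "\<sigma> p = undefined" if "\<not> is_var (MNode cs) p" for p
      proof (cases p)
        case Nil then show ?thesis using that by (simp add: is_var_MNode)
      next
        case (Cons i q)
        show ?thesis
        proof (cases "i < n")
          case True
          then have "\<not> is_var (ch (cs ! i)) q" using that Cons by (auto simp: is_var_MNode n_def)
          then show ?thesis using fi[OF True] Cons True unfolding sg G_def A_def SAT_iff by auto
        qed (simp add: sg G_def Cons)
      qed
      moreover have "satisfies (MNode cs) \<sigma>"
        unfolding satisfies_MNode
      proof (intro conjI allI impI)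
        fix j assume "j < length cs"
        then show "\<sigma> [] = sa (cs ! j) \<or> \<sigma> [j] = sb (cs ! j)"
          using fi[of j] by (auto simp: sg G_def A_def n_def)
      next
        fix i assume "i < length cs"
        then have "(\<lambda>q. \<sigma> (i # q)) = f i" by (auto simp: sg G_def n_def)
        then show "satisfies (ch (cs ! i)) (\<lambda>q. \<sigma> (i # q))"
          using fi[of i] \<open>i < length cs\<close> by (auto simp: A_def SAT_iff n_def)
      qed
      moreover have "\<sigma> [] = x" by (simp add: sg G_def)
      ultimately show "\<sigma> \<in> S" unfolding S_def SAT_iff by auto
    qed
  qed
  then have "card S = card (PiE {..<n} A)" by (rule bij_betw_same_card)
  also have "\<dots> = (\<Prod>i<n. card (A i))" by (simp add: card_PiE)
  finally show ?thesis unfolding S_def Z_def A_def n_def .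
qed

lemma card_A: "card {\<tau> \<in> SAT c. x = a \<or> \<tau> [] = b} = (if x = a then Z c True + Z c False else Z c b)"
  by (cases "x = a") (simp_all add: card_SAT Z_def)

lemma Z_MNode': "Z (MNode cs) x = (\<Prod>i<length cs. if x = sa (cs ! i) then Z (ch (cs ! i)) True + Z (ch (cs ! i)) False
    else Z (ch (cs ! i)) (sb (cs ! i)))"
  unfolding Z_MNode card_A ..

definition sg :: "bool \<Rightarrow> real" where "sg b = (if b then 1 else -1)"

fun eta :: "mtree \<Rightarrow> real" where
  "eta (MNode cs) = (\<Sum>(k, a, b, c)\<leftarrow>cs. LLterm (sg (\<not> a)) (sg b) (eta c))"

lemma eta_MNode: "eta (MNode cs) = (\<Sum>i<length cs. LLterm (sg (\<not> sa (cs ! i))) (sg (sb (cs ! i))) (eta (ch (cs ! i))))"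
proof -
  have "eta (MNode cs) = (\<Sum>x\<leftarrow>cs. LLterm (sg (\<not> sa x)) (sg (sb x)) (eta (ch x)))"
    unfolding eta.simps by (rule arg_cong[where f=sum_list], rule map_cong) (auto simp: sa_def sb_def ch_def split: prod.splits)
  also have "\<dots> = (\<Sum>i<length cs. LLterm (sg (\<not> sa (cs ! i))) (sg (sb (cs ! i))) (eta (ch (cs ! i))))"
    by (simp add: sum_list_sum_nth atLeast0LessThan)
  finally show ?thesis .
qed

lemma half_tanh: "(1 + tanh ((y::real) / 2)) / 2 = 1 / (1 + exp (- y))"
proof -
  have "tanh (y / 2) = (1 - exp (- y)) / (1 + exp (- y))" by (simp add: tanh_real_altdef)
  moreover have "1 + exp (- y) > 0" by (simp add: add_pos_pos)
  ultimately show ?thesis by (simp add: field_simps)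
qed

lemma main_count:
  "0 < Z T True \<and> 0 < Z T False \<and> real (Z T True) / real (Z T True + Z T False) = (1 + tanh (eta T / 2)) / 2"
proof (induction T)
  case (MNode cs)
  define n where "n = length cs"
  define c where "c i = ch (cs ! i)" for i
  define W where "W i = real (Z (c i) True) + real (Z (c i) False)" for i
  define q where "q i = real (Z (c i) (sb (cs ! i))) / W i" for i
  have IH: "0 < Z (c i) True \<and> 0 < Z (c i) False \<and> real (Z (c i) True) / real (Z (c i) True + Z (c i) False) = (1 + tanh (eta (c i) / 2)) / 2"
    if "i < n" for i
    using MNode[of "cs ! i"] that unfolding c_def ch_def n_def
    by (metis nth_mem prod.collapse snds.intros)
  have Wpos: "W i > 0" if "i < n" for i using IH[OF that] by (simp add: W_def)
  have qpos: "q i > 0" if "i < n" for i using IH[OF that] Wpos[OF that]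
    by (cases "sb (cs ! i)") (simp_all add: q_def)
  have qval: "q i = (1 + sg (sb (cs ! i)) * tanh (eta (c i) / 2)) / 2" if "i < n" for i
  proof (cases "sb (cs ! i)")
    case True then show ?thesis using IH[OF that] by (simp add: q_def sg_def W_def)
  next
    case False
    have "q i = 1 - real (Z (c i) True) / W i" using Wpos[OF that] False
      by (simp add: q_def W_def field_simps)
    moreover have "real (Z (c i) True) / W i = (1 + tanh (eta (c i) / 2)) / 2"
      using IH[OF that] by (simp add: W_def)
    ultimately show ?thesis using False by (simp add: sg_def field_simps)
  qed
  define P where "P x = (\<Prod>i<n. if x = sa (cs ! i) then 1 else q i)" for x
  have Ppos: "P x > 0" for x unfolding P_def using qpos by (intro prod_pos) auto
  have ZP: "real (Z (MNode cs) x) = (\<Prod>i<n. W i) * P x" for x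
  proof -
    have "real (Z (MNode cs) x) = (\<Prod>i<n. if x = sa (cs ! i) then W i else W i * q i)"
      unfolding Z_MNode' n_def[symmetric] of_nat_prod
    proof (intro prod.cong refl)
      fix i assume "i \<in> {..<n}"
      then have "W i > 0" using Wpos by simp
      then show "real (if x = sa (cs ! i) then Z (ch (cs ! i)) True + Z (ch (cs ! i)) False else Z (ch (cs ! i)) (sb (cs ! i))) =
         (if x = sa (cs ! i) then W i else W i * q i)"
        by (simp add: W_def q_def c_def)
    qed
    also have "\<dots> = (\<Prod>i<n. W i * (if x = sa (cs ! i) then 1 else q i))"
      by (intro prod.cong refl) auto
    also have "\<dots> = (\<Prod>i<n. W i) * P x" by (simp add: prod.distrib P_def)
    finally show ?thesis .
  qed
  have Wprod: "(\<Prod>i<n. W i) > 0" using Wpos by (intro prod_pos) auto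
  have Zpos: "0 < Z (MNode cs) x" for x
    using ZP[of x] Wprod Ppos[of x] by (metis of_nat_0_less_iff zero_less_mult_iff)
  have expeta: "exp (eta (MNode cs)) = P True / P False"
  proof -
    have "exp (eta (MNode cs)) = (\<Prod>i<n. exp (LLterm (sg (\<not> sa (cs ! i))) (sg (sb (cs ! i))) (eta (c i))))"
      unfolding eta_MNode n_def c_def by (rule exp_sum) simp
    also have "\<dots> = (\<Prod>i<n. (if True = sa (cs ! i) then 1 else q i) / (if False = sa (cs ! i) then 1 else q i))"
    proof (intro prod.cong refl)
      fix i assume "i \<in> {..<n}"
      then have i: "i < n" by simp
      have "exp (LLterm (sg (\<not> sa (cs ! i))) (sg (sb (cs ! i))) (eta (c i))) = exp (sg (\<not> sa (cs ! i)) * ln (q i))"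
        unfolding LLterm_def qval[OF i] ..
      also have "\<dots> = (if True = sa (cs ! i) then 1 else q i) / (if False = sa (cs ! i) then 1 else q i)"
        using qpos[OF i] by (cases "sa (cs ! i)") (simp_all add: sg_def exp_minus inverse_eq_divide)
      finally show "exp (LLterm (sg (\<not> sa (cs ! i))) (sg (sb (cs ! i))) (eta (c i))) =
         (if True = sa (cs ! i) then 1 else q i) / (if False = sa (cs ! i) then 1 else q i)" .
    qed
    also have "\<dots> = P True / P False" unfolding P_def by (rule prod_dividef)
    finally show ?thesis .
  qed
  have "real (Z (MNode cs) True) / real (Z (MNode cs) True + Z (MNode cs) False) = P True / (P True + P False)"
  proof -
    have "prod W {..<n} * P True + prod W {..<n} * P False = prod W {..<n} * (P True + P False)"
      by (simp add: algebra_simps)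
    moreover have "real (Z (MNode cs) True) / real (Z (MNode cs) True + Z (MNode cs) False) =
        (prod W {..<n} * P True) / (prod W {..<n} * P True + prod W {..<n} * P False)"
      by (simp only: ZP of_nat_add)
    ultimately show ?thesis using Wprod by (metis less_irrefl mult_divide_mult_cancel_left)
  qed
  also have "\<dots> = 1 / (1 + exp (- eta (MNode cs)))"
  proof -
    have e: "exp (- eta (MNode cs)) = P False / P True" by (simp only: exp_minus expeta) simp
    show ?thesis unfolding e using Ppos[of True] Ppos[of False] by (simp add: field_simps)
  qed
  also have "\<dots> = (1 + tanh (eta (MNode cs) / 2)) / 2" by (simp add: half_tanh)
  finally show ?case using Zpos by simp
qed

lemma mu_root_eta: "mu_root T = (1 + tanh (eta T / 2)) / 2"
  using main_count[of T] unfolding mu_root_def card_SAT Z_def by simp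



definition addP :: "'a::comm_monoid_add pmf \<Rightarrow> 'a pmf \<Rightarrow> 'a pmf" where
  "addP p q = bind_pmf p (\<lambda>x. map_pmf (\<lambda>y. x + y) q)"

lemma addP_return0[simp]: "addP p (return_pmf 0) = p" "addP (return_pmf 0) p = p"
  by (simp_all add: addP_def bind_return_pmf map_pmf_def bind_return_pmf')

lemma addP_comm: "addP p q = addP q p"
  unfolding addP_def map_pmf_def
  by (subst bind_commute_pmf) (simp add: add.commute)

lemma addP_assoc: "addP (addP p q) r = addP p (addP q r)"
  unfolding addP_def map_pmf_def
  by (simp add: bind_assoc_pmf bind_return_pmf add.assoc)

lemma addP_left_commute: "addP p (addP q r) = addP q (addP p r)"
  by (metis addP_assoc addP_comm)

lemma addP_bind_left: "addP (bind_pmf M f) q = bind_pmf M (\<lambda>x. addP (f x) q)"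
  unfolding addP_def by (simp add: bind_assoc_pmf)

lemma addP_bind_right: "addP p (bind_pmf M g) = bind_pmf M (\<lambda>x. addP p (g x))"
  unfolding addP_def map_bind_pmf by (subst bind_commute_pmf) simp

definition additive :: "('a::comm_monoid_add \<Rightarrow> 'b::comm_monoid_add) \<Rightarrow> bool" where
  "additive f \<longleftrightarrow> f 0 = 0 \<and> (\<forall>x y. f (x + y) = f x + f y)"

lemma map_addP: "additive f \<Longrightarrow> map_pmf f (addP p q) = addP (map_pmf f p) (map_pmf f q)"
  unfolding addP_def additive_def map_bind_pmf bind_map_pmf map_pmf_comp
  by simp

definition R :: "nat \<Rightarrow> 'a::comm_monoid_add pmf \<Rightarrow> 'a pmf" where
  "R n p = map_pmf sum_list (replicate_pmf n p)"

lemma R_0[simp]: "R 0 p = return_pmf 0"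
  by (simp add: R_def)

lemma R_Suc: "R (Suc n) p = addP p (R n p)"
  by (simp add: R_def addP_def map_bind_pmf map_pmf_def bind_assoc_pmf bind_return_pmf)

lemma map_R: "additive f \<Longrightarrow> map_pmf f (R n p) = R n (map_pmf f p)"
  by (induction n) (simp_all add: R_Suc map_addP additive_def)

lemma R_return0[simp]: "R n (return_pmf 0) = return_pmf 0"
  by (induction n) (simp_all add: R_Suc)

lemma R_map_replicate: "map_pmf (\<lambda>cs. sum_list (map g cs)) (replicate_pmf n p) = R n (map_pmf g p)"
proof (induction n)
  case (Suc n)
  have "map_pmf (\<lambda>cs. sum_list (map g cs)) (replicate_pmf (Suc n) p) =
     bind_pmf p (\<lambda>x. map_pmf (\<lambda>y. g x + y) (map_pmf (\<lambda>cs. sum_list (map g cs)) (replicate_pmf n p)))"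
    by (simp add: map_bind_pmf map_pmf_comp map_pmf_def[symmetric])
  also have "\<dots> = R (Suc n) (map_pmf g p)"
    unfolding Suc R_Suc addP_def bind_map_pmf ..
  finally show ?case .
qed (simp add: R_def)

definition CP :: "real \<Rightarrow> 'a::comm_monoid_add pmf \<Rightarrow> 'a pmf" where
  "CP lam p = bind_pmf (Po lam) (\<lambda>N. R N p)"

lemma CP_nonpos: "lam \<le> 0 \<Longrightarrow> CP lam p = return_pmf 0"
  by (simp add: CP_def Po_def bind_return_pmf)

lemma map_CP: "additive f \<Longrightarrow> map_pmf f (CP lam p) = CP lam (map_pmf f p)"
  by (simp add: CP_def map_bind_pmf map_R)

lemma CP_return0[simp]: "CP lam (return_pmf 0) = return_pmf 0"
  by (simp add: CP_def)

definition mix :: "real \<Rightarrow> 'a pmf \<Rightarrow> 'a pmf \<Rightarrow> 'a pmf" where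
  "mix w p q = bind_pmf (bernoulli_pmf w) (\<lambda>b. if b then p else q)"

lemma mix_same[simp]: "mix w p p = p"
  by (simp add: mix_def)

lemma R_mix:
  assumes w: "0 \<le> w" "w \<le> 1"
  shows "R N (mix w p q) = bind_pmf (binomial_pmf N w) (\<lambda>j. addP (R j p) (R (N - j) q))"
proof (induction N)
  case 0
  then show ?case using w by (simp add: binomial_pmf_0 bind_return_pmf)
next
  case (Suc N)
  have "R (Suc N) (mix w p q) = addP (mix w p q) (R N (mix w p q))" by (rule R_Suc)
  also have "\<dots> = bind_pmf (bernoulli_pmf w) (\<lambda>b. bind_pmf (binomial_pmf N w)
       (\<lambda>j. addP (if b then p else q) (addP (R j p) (R (N - j) q))))"
    unfolding Suc by (simp only: mix_def addP_bind_left addP_bind_right) (rule bind_commute_pmf)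
  also have "\<dots> = bind_pmf (bernoulli_pmf w) (\<lambda>b. bind_pmf (binomial_pmf N w)
       (\<lambda>k. addP (R ((if b then 1 else 0) + k) p) (R (Suc N - ((if b then 1 else 0) + k)) q)))"
  proof (intro bind_pmf_cong refl)
    fix b k assume k: "k \<in> set_pmf (binomial_pmf N w)"
    have "k \<le> N" using k w by (auto simp: set_pmf_binomial_eq split: if_splits)
    show "addP (if b then p else q) (addP (R k p) (R (N - k) q)) =
          addP (R ((if b then 1 else 0) + k) p) (R (Suc N - ((if b then 1 else 0) + k)) q)"
    proof (cases b)
      case True then show ?thesis by (simp add: R_Suc addP_assoc)
    next
      case False
      have "Suc N - k = Suc (N - k)" using \<open>k \<le> N\<close> by simp
      then show ?thesis using False by (simp add: R_Suc addP_left_commute)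
    qed
  qed
  also have "\<dots> = bind_pmf (binomial_pmf (Suc N) w) (\<lambda>j. addP (R j p) (R (Suc N - j) q))"
    using w by (simp add: binomial_pmf_Suc bind_assoc_pmf bind_return_pmf)
  finally show ?case .
qed

lemma pmf_map_split:
  assumes w: "0 \<le> w" "w \<le> 1"
  shows "pmf (map_pmf (\<lambda>i. (i, N - i)) (binomial_pmf N w)) (j, m) =
    (if N = j + m then pmf (binomial_pmf N w) j else 0)"
proof (cases "N = j + m")
  case True
  have "inj (\<lambda>i::nat. (i, N - i))" by (auto simp: inj_def)
  from pmf_map_inj'[OF this, of "binomial_pmf N w" j] True show ?thesis by simp
next
  case False
  have "(j, m) \<notin> set_pmf (map_pmf (\<lambda>i. (i, N - i)) (binomial_pmf N w))"
    using w False by (auto simp: set_pmf_binomial_eq split: if_splits)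
  then have "pmf (map_pmf (\<lambda>i. (i, N - i)) (binomial_pmf N w)) (j, m) = 0"
    by (rule iffD2[OF pmf_eq_0_set_pmf])
  then show ?thesis using False by simp
qed

lemma poisson_thin:
  assumes a: "a > 0" and b: "b > 0"
  shows "bind_pmf (poisson_pmf (a + b)) (\<lambda>N. map_pmf (\<lambda>i. (i, N - i)) (binomial_pmf N (a / (a + b))))
     = pair_pmf (poisson_pmf a) (poisson_pmf b)"
proof (rule pmf_eqI)
  fix x :: "nat \<times> nat"
  obtain j m where x: "x = (j, m)" by (cases x)
  define w where "w = a / (a + b)"
  have w: "0 \<le> w" "w \<le> 1" using a b by (auto simp: w_def field_simps)
  have ab: "a + b > 0" using a b by simp
  have "pmf (bind_pmf (poisson_pmf (a + b)) (\<lambda>N. map_pmf (\<lambda>i. (i, N - i)) (binomial_pmf N w))) x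
     = (\<integral>N. (if N = j + m then pmf (binomial_pmf N w) j else 0) \<partial>measure_pmf (poisson_pmf (a + b)))"
    unfolding pmf_bind x pmf_map_split[OF w] ..
  also have "\<dots> = (\<Sum>N\<in>{j + m}. (if N = j + m then pmf (binomial_pmf N w) j else 0) * pmf (poisson_pmf (a + b)) N)"
    by (rule integral_measure_pmf_real) (auto split: if_splits)
  also have "\<dots> = real ((j + m) choose j) * w ^ j * (1 - w) ^ m * ((a + b) ^ (j + m) / fact (j + m) * exp (- (a + b)))"
    using w ab by simp
  also have "\<dots> = a ^ j / fact j * exp (- a) * (b ^ m / fact m * exp (- b))"
  proof -
    have c: "real ((j + m) choose j) = fact (j + m) / (fact j * fact m)"
      by (subst binomial_fact) simp_all
    have w1: "1 - w = b / (a + b)" using ab by (simp add: w_def field_simps)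
    have "real ((j + m) choose j) * w ^ j * (1 - w) ^ m * ((a + b) ^ (j + m) / fact (j + m) * exp (- (a + b)))
       = (fact (j + m) / (fact j * fact m)) * (a ^ j / (a + b) ^ j) * (b ^ m / (a + b) ^ m) * ((a + b) ^ (j + m) / fact (j + m) * exp (- (a + b)))"
      unfolding c w1 by (simp add: w_def power_divide)
    also have "\<dots> = a ^ j / fact j * exp (- a) * (b ^ m / fact m * exp (- b))"
      using ab by (simp add: power_add exp_add[symmetric] field_simps)
    finally show ?thesis .
  qed
  also have "\<dots> = pmf (pair_pmf (poisson_pmf a) (poisson_pmf b)) x"
    using a b by (simp add: x pmf_pair)
  finally show "pmf (bind_pmf (poisson_pmf (a + b)) (\<lambda>N. map_pmf (\<lambda>i. (i, N - i)) (binomial_pmf N (a / (a + b))))) x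
     = pmf (pair_pmf (poisson_pmf a) (poisson_pmf b)) x" unfolding w_def .
qed

lemma bernoulli_0: "bernoulli_pmf 0 = return_pmf False"
  by (rule pmf_eqI) (case_tac i; simp)

lemma bernoulli_1: "bernoulli_pmf 1 = return_pmf True"
  by (rule pmf_eqI) (case_tac i; simp)

lemma CP_add:
  assumes a: "a \<ge> 0" and b: "b \<ge> 0" and w: "0 \<le> w" "w \<le> 1"
    and ww: "a + b > 0 \<Longrightarrow> w = a / (a + b)" and c: "c = a + b"
  shows "addP (CP a p) (CP b q) = CP c (mix w p q)"
proof -
  consider "a = 0" "b = 0" | "a = 0" "b > 0" | "a > 0" "b = 0" | "a > 0" "b > 0"
    using a b by linarith
  then show ?thesis
  proof cases
    case 1 then show ?thesis using c by (simp add: CP_nonpos)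
  next
    case 2
    then have "w = 0" using ww by simp
    then show ?thesis using 2 c by (simp add: CP_nonpos mix_def bernoulli_0 bind_return_pmf)
  next
    case 3
    then have "w = 1" using ww by simp
    then show ?thesis using 3 c by (simp add: CP_nonpos mix_def bernoulli_1 bind_return_pmf)
  next
    case 4
    then have wd: "w = a / (a + b)" using ww by simp
    have "CP c (mix w p q) = bind_pmf (poisson_pmf (a + b)) (\<lambda>N. R N (mix w p q))"
      using 4 c by (simp add: CP_def Po_def)
    also have "\<dots> = bind_pmf (poisson_pmf (a + b)) (\<lambda>N. bind_pmf (binomial_pmf N w) (\<lambda>j. addP (R j p) (R (N - j) q)))"
      using w by (simp add: R_mix)
    also have "\<dots> = bind_pmf (bind_pmf (poisson_pmf (a + b)) (\<lambda>N. map_pmf (\<lambda>i. (i, N - i)) (binomial_pmf N w)))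
        (\<lambda>x. addP (R (fst x) p) (R (snd x) q))"
      by (simp add: bind_assoc_pmf bind_map_pmf)
    also have "\<dots> = bind_pmf (pair_pmf (poisson_pmf a) (poisson_pmf b)) (\<lambda>x. addP (R (fst x) p) (R (snd x) q))"
      unfolding wd using poisson_thin[OF 4] by simp
    also have "\<dots> = addP (CP a p) (CP b q)"
      using 4 by (simp add: pair_pmf_def CP_def Po_def bind_assoc_pmf bind_return_pmf addP_bind_left addP_bind_right)
        (rule bind_commute_pmf)
    finally show ?thesis by simp
  qed
qed

lemma CP_add':
  assumes a: "a \<ge> 0" and b: "b \<ge> 0"
  shows "addP (CP a p) (CP b q) = CP (a + b) (mix (a / (a + b)) p q)"
  using a b by (intro CP_add) (auto simp: field_simps divide_le_eq_1)

lemma CP_add_same: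
  assumes a: "a \<ge> 0" and b: "b \<ge> 0"
  shows "addP (CP a p) (CP b p) = CP (a + b) p"
  by (simp only: CP_add'[OF a b] mix_same)

definition bb :: "bool pmf" where "bb = bernoulli_pmf (1/2)"

lemma mix_half4:
  "mix (1/2) (mix (1/2) (P True True) (P True False)) (mix (1/2) (P False True) (P False False))
   = bind_pmf bb (\<lambda>b. bind_pmf bb (\<lambda>c. P b c))"
  unfolding mix_def bb_def
proof (intro bind_pmf_cong refl)
  fix b :: bool
  show "(if b then bernoulli_pmf (1 / 2) \<bind> (\<lambda>ba. if ba then P True True else P True False)
          else bernoulli_pmf (1 / 2) \<bind> (\<lambda>b. if b then P False True else P False False)) =
         bernoulli_pmf (1 / 2) \<bind> P b"
    by (cases b) (auto intro!: bind_pmf_cong)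
qed

lemma CP4:
  assumes lam: "lam \<ge> 0"
  shows "addP (CP (lam / 4) (P True True)) (addP (CP (lam / 4) (P True False))
          (addP (CP (lam / 4) (P False True)) (addP (CP (lam / 4) (P False False)) REST)))
       = addP (CP lam (bind_pmf bb (\<lambda>b. bind_pmf bb (\<lambda>c. P b c)))) REST"
proof (cases "lam = 0")
  case True then show ?thesis by (simp add: CP_nonpos)
next
  case False
  then have lp: "lam > 0" using lam by simp
  have h1: "lam / 4 + lam / 4 = lam / 2" "lam / 2 + lam / 2 = lam" by simp_all
  have h2: "(lam / 4) / (lam / 4 + lam / 4) = 1/2" "(lam / 2) / (lam / 2 + lam / 2) = 1/2"
    using lp by simp_all
  have "addP (CP (lam / 4) (P True True)) (addP (CP (lam / 4) (P True False))
          (addP (CP (lam / 4) (P False True)) (addP (CP (lam / 4) (P False False)) REST)))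
      = addP (addP (addP (CP (lam / 4) (P True True)) (CP (lam / 4) (P True False)))
            (addP (CP (lam / 4) (P False True)) (CP (lam / 4) (P False False)))) REST"
    by (simp add: addP_assoc)
  also have "\<dots> = addP (CP lam (mix (1/2) (mix (1/2) (P True True) (P True False)) (mix (1/2) (P False True) (P False False)))) REST"
    using lp by (simp add: CP_add' h1 h2)
  finally show ?thesis by (simp add: mix_half4)
qed

lemma sg_inj: "inj sg" by (auto simp: inj_def sg_def split: if_splits)
lemma sgn_inj: "inj (\<lambda>b. sg (\<not> b))" by (auto simp: inj_def sg_def split: if_splits)

lemma sign_pmf_sg: "sign_pmf = map_pmf sg bb"
proof -
  have "map_pmf sg bb = pmf_of_set (sg ` UNIV)"
    unfolding bb_def bernoulli_pmf_half_conv_pmf_of_set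
    by (rule map_pmf_of_set_inj) (auto simp: sg_inj inj_on_def inj_def sg_def)
  also have "sg ` UNIV = {1, -1}" by (auto simp: sg_def image_def)
  finally show ?thesis by (simp add: sign_pmf_def)
qed

lemma sign_pmf_sgn: "sign_pmf = map_pmf (\<lambda>b. sg (\<not> b)) bb"
proof -
  have "map_pmf (\<lambda>b. sg (\<not> b)) bb = pmf_of_set ((\<lambda>b. sg (\<not> b)) ` UNIV)"
    unfolding bb_def bernoulli_pmf_half_conv_pmf_of_set
    by (rule map_pmf_of_set_inj) (auto simp: inj_on_def sg_def split: if_splits)
  also have "(\<lambda>b. sg (\<not> b)) ` UNIV = {1, -1}" by (auto simp: sg_def image_def)
  finally show ?thesis by (simp add: sign_pmf_def)
qed

definition unitf :: "real \<Rightarrow> real \<Rightarrow> real \<times> real \<Rightarrow> real \<times> real" where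
  "unitf s r \<xi> = (LLterm s r (fst \<xi>), LLterm s r (snd \<xi>))"

lemma LLunit_alt: "LLunit \<rho> = bind_pmf bb (\<lambda>b. bind_pmf bb (\<lambda>c. map_pmf (unitf (sg (\<not> b)) (sg c)) \<rho>))"
proof -
  have "LLunit \<rho> = bind_pmf \<rho> (\<lambda>\<xi>. bind_pmf bb (\<lambda>b. bind_pmf bb (\<lambda>c. return_pmf (unitf (sg (\<not> b)) (sg c) \<xi>))))"
    unfolding LLunit_def
    by (subst sign_pmf_sgn, subst sign_pmf_sg) (simp add: bind_map_pmf unitf_def)
  also have "\<dots> = bind_pmf bb (\<lambda>b. bind_pmf \<rho> (\<lambda>\<xi>. bind_pmf bb (\<lambda>c. return_pmf (unitf (sg (\<not> b)) (sg c) \<xi>))))"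
    by (rule bind_commute_pmf)
  also have "\<dots> = bind_pmf bb (\<lambda>b. bind_pmf bb (\<lambda>c. bind_pmf \<rho> (\<lambda>\<xi>. return_pmf (unitf (sg (\<not> b)) (sg c) \<xi>))))"
    by (subst bind_commute_pmf) (rule refl)
  finally show ?thesis by (simp add: map_pmf_def)
qed



definition gh :: "nat \<Rightarrow> ntype \<times> bool \<times> bool \<times> mtree \<Rightarrow> real" where
  "gh h x = (if keep h (fst x) then LLterm (sg (\<not> sa x)) (sg (sb x)) (eta (restrict h (ch x))) else 0)"

lemma eta_restrict: "eta (restrict h (MNode cs)) = sum_list (map (gh h) cs)"
  by (induction cs) (auto simp: gh_def sa_def sb_def ch_def split: prod.splits)

lemma sum_list_pair: "sum_list (map (\<lambda>x. (f x, g x)) xs) = (sum_list (map f xs), sum_list (map g xs))"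
  by (induction xs) (auto simp: zero_prod_def)

definition E :: "mtree \<Rightarrow> real \<times> real" where
  "E T = (eta (restrict 1 T), eta (restrict 2 T))"

lemma E_MNode: "E (MNode cs) = sum_list (map (\<lambda>x. (gh 1 x, gh 2 x)) cs)"
  by (simp only: E_def eta_restrict sum_list_pair)

lemma map_concat_pmfs: "map_pmf (\<lambda>cs. sum_list (map g cs)) (concat_pmfs ps) =
   foldr addP (map (map_pmf (\<lambda>cs. sum_list (map g cs))) ps) (return_pmf 0)"
proof (induction ps)
  case (Cons p ps)
  have "map_pmf (\<lambda>cs. sum_list (map g cs)) (concat_pmfs (p # ps)) =
     addP (map_pmf (\<lambda>cs. sum_list (map g cs)) p) (map_pmf (\<lambda>cs. sum_list (map g cs)) (concat_pmfs ps))"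
    unfolding addP_def by (simp add: map_bind_pmf bind_map_pmf map_pmf_comp) (simp add: map_pmf_def)
  then show ?case using Cons by simp
qed simp

lemma map_child_group: "map_pmf (\<lambda>cs. sum_list (map g cs)) (child_group lam k s s' p) =
   CP lam (map_pmf (\<lambda>c. g (k, s, s', c)) p)"
  unfolding child_group_def CP_def map_bind_pmf
  by (simp add: R_map_replicate[symmetric] map_pmf_comp map_pmf_def[symmetric] comp_def)

lemma map_gen_Suc:
  assumes "\<And>cs. V (MNode cs) = sum_list (map g cs)"
  shows "map_pmf V (gen d t (Suc l) k) = map_pmf (\<lambda>cs. sum_list (map g cs))
     (concat_pmfs [child_group lam k' s s' (gen d t l k'). (k', lam) \<leftarrow> offspring d t k, (s, s') \<leftarrow> signs])"
  by (simp add: map_pmf_comp assms)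


lemma addP_maps: "addP (map_pmf f X) (map_pmf g Y) = bind_pmf X (\<lambda>x. bind_pmf Y (\<lambda>y. return_pmf (f x + g y)))"
  by (simp add: addP_def bind_map_pmf map_pmf_comp map_pmf_def bind_assoc_pmf bind_return_pmf)

lemma addP3_bind: "addP (bind_pmf M F) (addP (bind_pmf N G) (bind_pmf Q H)) =
   bind_pmf M (\<lambda>x. bind_pmf N (\<lambda>y. bind_pmf Q (\<lambda>z. addP (F x) (addP (G y) (H z)))))"
  by (simp only: addP_bind_left) (simp only: addP_bind_right)

lemma sum_list_zero': "sum_list (map (\<lambda>_. 0) xs) = (0::'a::monoid_add)"
  by (induction xs) auto

lemma sum_list_prod_split: "sum_list (A :: ('a::monoid_add \<times> 'b::monoid_add) list) = (sum_list (map fst A), sum_list (map snd A))"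
  by (induction A) (auto simp: zero_prod_def)

lemma LL_decomp:
  "LL d t \<rho> = addP (CP (d * t) (LLunit \<rho>)) (addP (CP (d * (1 - t)) (map_pmf (\<lambda>z. (fst z, 0)) (LLunit \<rho>)))
      (CP (d * (1 - t)) (map_pmf (\<lambda>z. (0, snd z)) (LLunit \<rho>))))"
proof -
  define U where "U = LLunit \<rho>"
  have "addP (CP (d * t) U) (addP (CP (d * (1 - t)) (map_pmf (\<lambda>z. (fst z, 0)) U))
      (CP (d * (1 - t)) (map_pmf (\<lambda>z. (0, snd z)) U))) =
    bind_pmf (Po (t * d)) (\<lambda>D. bind_pmf (Po ((1 - t) * d)) (\<lambda>D'. bind_pmf (Po ((1 - t) * d)) (\<lambda>D''.
      addP (R D U) (addP (R D' (map_pmf (\<lambda>z. (fst z, 0)) U)) (R D'' (map_pmf (\<lambda>z. (0, snd z)) U))))))"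
    unfolding CP_def addP3_bind by (simp add: mult.commute)
  also have "\<dots> = LL d t \<rho>"
    unfolding LL_def U_def[symmetric]
  proof (intro bind_pmf_cong refl)
    fix D D' D'' :: nat
    show "addP (R D U) (addP (R D' (map_pmf (\<lambda>z. (fst z, 0)) U)) (R D'' (map_pmf (\<lambda>z. (0, snd z)) U))) =
      replicate_pmf D U \<bind> (\<lambda>A. replicate_pmf D' U \<bind> (\<lambda>B. replicate_pmf D'' U \<bind>
        (\<lambda>C. return_pmf (sum_list (map fst A) + sum_list (map fst B), sum_list (map snd A) + sum_list (map snd C)))))"
      unfolding R_map_replicate[symmetric] unfolding R_def addP_def
      by (simp add: map_pmf_def bind_assoc_pmf bind_return_pmf sum_list_zero' comp_def)
        (subst (1 2 3) sum_list_prod_split, simp add: comp_def sum_list_zero')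
  qed
  finally show ?thesis unfolding U_def by simp
qed



lemma CP4':
  assumes lam: "lam \<ge> 0"
  shows "addP (CP (lam / 4) (P True True)) (addP (CP (lam / 4) (P True False))
          (addP (CP (lam / 4) (P False True)) (CP (lam / 4) (P False False))))
       = CP lam (bind_pmf bb (\<lambda>b. bind_pmf bb (\<lambda>c. P b c)))"
  using CP4[OF lam, of P "return_pmf 0"] by simp

lemma additive_fst: "additive fst" by (simp add: additive_def zero_prod_def)
lemma additive_snd: "additive snd" by (simp add: additive_def zero_prod_def)

lemma eta_restrict_V: "eta (restrict h (MNode cs)) = sum_list (map (gh h) cs)"
  by (rule eta_restrict)

lemma main_ind:
  assumes d: "0 < d" and t: "0 \<le> t" "t \<le> 1"
  shows "map_pmf E (gen d t l Shared) = rho d t l \<and>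
         map_pmf (\<lambda>T. eta (restrict 1 T)) (gen d t l Dist1) = map_pmf fst (rho d t l) \<and>
         map_pmf (\<lambda>T. eta (restrict 2 T)) (gen d t l Dist2) = map_pmf snd (rho d t l)"
proof (induction l)
  case 0
  then show ?case by (simp add: E_def zero_prod_def)
next
  case (Suc l)
  define \<rho> where "\<rho> = rho d t l"
  have IH: "map_pmf E (gen d t l Shared) = \<rho>"
     "map_pmf (\<lambda>T. eta (restrict 1 T)) (gen d t l Dist1) = map_pmf fst \<rho>"
     "map_pmf (\<lambda>T. eta (restrict 2 T)) (gen d t l Dist2) = map_pmf snd \<rho>"
    using Suc by (simp_all add: \<rho>_def)
  define PS where "PS a b = map_pmf (unitf (sg (\<not> a)) (sg b)) \<rho>" for a b
  define P1 where "P1 a b = map_pmf (\<lambda>\<xi>. (LLterm (sg (\<not> a)) (sg b) (fst \<xi>), 0::real)) \<rho>" for a b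
  define P2 where "P2 a b = map_pmf (\<lambda>\<xi>. (0::real, LLterm (sg (\<not> a)) (sg b) (snd \<xi>))) \<rho>" for a b
  define Q1 where "Q1 a b = map_pmf (\<lambda>\<xi>. LLterm (sg (\<not> a)) (sg b) (fst \<xi>)) \<rho>" for a b
  define Q2 where "Q2 a b = map_pmf (\<lambda>\<xi>. LLterm (sg (\<not> a)) (sg b) (snd \<xi>)) \<rho>" for a b
  have GS: "map_pmf (\<lambda>c. (gh (Suc 0) (Shared, a, b, c), gh 2 (Shared, a, b, c))) (gen d t l Shared) = PS a b" for a b
    unfolding PS_def IH(1)[symmetric] map_pmf_comp
    by (intro map_pmf_cong refl) (simp add: gh_def sa_def sb_def ch_def unitf_def E_def)
  have G1: "map_pmf (\<lambda>c. (gh (Suc 0) (Dist1, a, b, c), gh 2 (Dist1, a, b, c))) (gen d t l Dist1) = P1 a b" for a b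
  proof -
    have "P1 a b = map_pmf (\<lambda>x. (LLterm (sg (\<not> a)) (sg b) x, 0)) (map_pmf fst \<rho>)"
      by (simp add: P1_def map_pmf_comp)
    also have "\<dots> = map_pmf (\<lambda>c. (gh (Suc 0) (Dist1, a, b, c), gh 2 (Dist1, a, b, c))) (gen d t l Dist1)"
      unfolding IH(2)[symmetric] map_pmf_comp
      by (intro map_pmf_cong refl) (simp add: gh_def sa_def sb_def ch_def)
    finally show ?thesis by simp
  qed
  have G2: "map_pmf (\<lambda>c. (gh (Suc 0) (Dist2, a, b, c), gh 2 (Dist2, a, b, c))) (gen d t l Dist2) = P2 a b" for a b
  proof -
    have "P2 a b = map_pmf (\<lambda>x. (0, LLterm (sg (\<not> a)) (sg b) x)) (map_pmf snd \<rho>)"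
      by (simp add: P2_def map_pmf_comp)
    also have "\<dots> = map_pmf (\<lambda>c. (gh (Suc 0) (Dist2, a, b, c), gh 2 (Dist2, a, b, c))) (gen d t l Dist2)"
      unfolding IH(3)[symmetric] map_pmf_comp
      by (intro map_pmf_cong refl) (simp add: gh_def sa_def sb_def ch_def)
    finally show ?thesis by simp
  qed
  have H1: "map_pmf (\<lambda>c. gh (Suc 0) (Dist1, a, b, c)) (gen d t l Dist1) = Q1 a b" for a b
  proof -
    have "Q1 a b = map_pmf (\<lambda>x. LLterm (sg (\<not> a)) (sg b) x) (map_pmf fst \<rho>)"
      by (simp add: Q1_def map_pmf_comp)
    also have "\<dots> = map_pmf (\<lambda>c. gh (Suc 0) (Dist1, a, b, c)) (gen d t l Dist1)"
      unfolding IH(2)[symmetric] map_pmf_comp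
      by (intro map_pmf_cong refl) (simp add: gh_def sa_def sb_def ch_def)
    finally show ?thesis by simp
  qed
  have H2: "map_pmf (\<lambda>c. gh 2 (Dist2, a, b, c)) (gen d t l Dist2) = Q2 a b" for a b
  proof -
    have "Q2 a b = map_pmf (\<lambda>x. LLterm (sg (\<not> a)) (sg b) x) (map_pmf snd \<rho>)"
      by (simp add: Q2_def map_pmf_comp)
    also have "\<dots> = map_pmf (\<lambda>c. gh 2 (Dist2, a, b, c)) (gen d t l Dist2)"
      unfolding IH(3)[symmetric] map_pmf_comp
      by (intro map_pmf_cong refl) (simp add: gh_def sa_def sb_def ch_def)
    finally show ?thesis by simp
  qed
  have dt: "d * t \<ge> 0" "d * (1 - t) \<ge> 0" "d \<ge> 0" using d t by simp_all
  have "map_pmf E (gen d t (Suc l) Shared) =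
     addP (CP (d * t / 4) (PS True True)) (addP (CP (d * t / 4) (PS True False))
     (addP (CP (d * t / 4) (PS False True)) (addP (CP (d * t / 4) (PS False False))
     (addP (CP (d * (1 - t) / 4) (P1 True True)) (addP (CP (d * (1 - t) / 4) (P1 True False))
     (addP (CP (d * (1 - t) / 4) (P1 False True)) (addP (CP (d * (1 - t) / 4) (P1 False False))
     (addP (CP (d * (1 - t) / 4) (P2 True True)) (addP (CP (d * (1 - t) / 4) (P2 True False))
     (addP (CP (d * (1 - t) / 4) (P2 False True)) (CP (d * (1 - t) / 4) (P2 False False))))))))))))"
    apply (subst map_gen_Suc[OF E_MNode])
    apply (simp add: map_concat_pmfs signs_def map_child_group GS G1 G2 del: concat_pmfs.simps)
    done
  also have "\<dots> = addP (CP (d * t) (bind_pmf bb (\<lambda>b. bind_pmf bb (\<lambda>c. PS b c))))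
     (addP (CP (d * (1 - t)) (bind_pmf bb (\<lambda>b. bind_pmf bb (\<lambda>c. P1 b c))))
           (CP (d * (1 - t)) (bind_pmf bb (\<lambda>b. bind_pmf bb (\<lambda>c. P2 b c)))))"
    by (simp only: CP4[OF dt(1)] CP4[OF dt(2)] CP4'[OF dt(2)])
  also have "\<dots> = rho d t (Suc l)"
  proof -
    have "bind_pmf bb (\<lambda>b. bind_pmf bb (\<lambda>c. PS b c)) = LLunit \<rho>"
      by (simp add: PS_def LLunit_alt)
    moreover have "bind_pmf bb (\<lambda>b. bind_pmf bb (\<lambda>c. P1 b c)) = map_pmf (\<lambda>z. (fst z, 0)) (LLunit \<rho>)"
      by (simp add: P1_def LLunit_alt map_bind_pmf map_pmf_comp unitf_def)
    moreover have "bind_pmf bb (\<lambda>b. bind_pmf bb (\<lambda>c. P2 b c)) = map_pmf (\<lambda>z. (0, snd z)) (LLunit \<rho>)"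
      by (simp add: P2_def LLunit_alt map_bind_pmf map_pmf_comp unitf_def)
    ultimately show ?thesis by (simp add: LL_decomp \<rho>_def)
  qed
  finally have S: "map_pmf E (gen d t (Suc l) Shared) = rho d t (Suc l)" .
  have LLfst: "map_pmf fst (rho d t (Suc l)) = CP d (map_pmf fst (LLunit \<rho>))"
  proof -
    have "map_pmf fst (rho d t (Suc l)) = addP (CP (d * t) (map_pmf fst (LLunit \<rho>))) (CP (d * (1 - t)) (map_pmf fst (LLunit \<rho>)))"
      by (simp add: LL_decomp \<rho>_def map_addP additive_fst map_CP map_pmf_comp)
    also have "\<dots> = CP (d * t + d * (1 - t)) (map_pmf fst (LLunit \<rho>))"
      by (rule CP_add_same[OF dt(1,2)])
    finally show ?thesis by (simp add: algebra_simps)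
  qed
  have LLsnd: "map_pmf snd (rho d t (Suc l)) = CP d (map_pmf snd (LLunit \<rho>))"
  proof -
    have "map_pmf snd (rho d t (Suc l)) = addP (CP (d * t) (map_pmf snd (LLunit \<rho>))) (CP (d * (1 - t)) (map_pmf snd (LLunit \<rho>)))"
      by (simp add: LL_decomp \<rho>_def map_addP additive_snd map_CP map_pmf_comp)
    also have "\<dots> = CP (d * t + d * (1 - t)) (map_pmf snd (LLunit \<rho>))"
      by (rule CP_add_same[OF dt(1,2)])
    finally show ?thesis by (simp add: algebra_simps)
  qed
  have "map_pmf (\<lambda>T. eta (restrict 1 T)) (gen d t (Suc l) Dist1) =
     addP (CP (d / 4) (Q1 True True)) (addP (CP (d / 4) (Q1 True False))
     (addP (CP (d / 4) (Q1 False True)) (CP (d / 4) (Q1 False False))))"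
    apply (subst map_gen_Suc[OF eta_restrict_V])
    apply (simp add: map_concat_pmfs signs_def map_child_group H1 del: concat_pmfs.simps)
    done
  also have "\<dots> = CP d (bind_pmf bb (\<lambda>b. bind_pmf bb (\<lambda>c. Q1 b c)))"
    by (rule CP4'[OF dt(3)])
  also have "\<dots> = map_pmf fst (rho d t (Suc l))"
    unfolding LLfst by (simp add: Q1_def LLunit_alt map_bind_pmf map_pmf_comp unitf_def)
  finally have D1: "map_pmf (\<lambda>T. eta (restrict 1 T)) (gen d t (Suc l) Dist1) = map_pmf fst (rho d t (Suc l))" .
  have "map_pmf (\<lambda>T. eta (restrict 2 T)) (gen d t (Suc l) Dist2) =
     addP (CP (d / 4) (Q2 True True)) (addP (CP (d / 4) (Q2 True False))
     (addP (CP (d / 4) (Q2 False True)) (CP (d / 4) (Q2 False False))))"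
    apply (subst map_gen_Suc[OF eta_restrict_V])
    apply (simp add: map_concat_pmfs signs_def map_child_group H2 del: concat_pmfs.simps)
    done
  also have "\<dots> = CP d (bind_pmf bb (\<lambda>b. bind_pmf bb (\<lambda>c. Q2 b c)))"
    by (rule CP4'[OF dt(3)])
  also have "\<dots> = map_pmf snd (rho d t (Suc l))"
    unfolding LLsnd by (simp add: Q2_def LLunit_alt map_bind_pmf map_pmf_comp unitf_def)
  finally have D2: "map_pmf (\<lambda>T. eta (restrict 2 T)) (gen d t (Suc l) Dist2) = map_pmf snd (rho d t (Suc l))" .
  show ?case using S D1 D2 by simp
qed


theorem proposition2p7:
  fixes d t :: real and l :: nat
  assumes "0 < d" and "d < 2" and "0 \<le> t" and "t \<le> 1"
  shows "vec_mu d t l = map_pmf psi (rho d t l)"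
proof -
  have "vec_mu d t l = map_pmf psi (map_pmf E (gen d t l Shared))"
    unfolding vec_mu_def Ttensor_def map_pmf_comp
    by (intro map_pmf_cong refl) (simp add: psi_def E_def mu_root_eta)
  also have "\<dots> = map_pmf psi (rho d t l)"
    using main_ind[OF assms(1) assms(3) assms(4)] by simp
  finally show ?thesis .
qed

end
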